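(* Let $\Gamma$ be a metrized graph and let $p,q,s\in\Gamma$ with $p\neq q$. Writing $p$ also for the point of $\Gamma_{pq}$ obtained by identifying $p$ and $q$, we have $$r_{\Gamma_{pq}}(p,s)=\frac{r(p,s)\,r(q,s)-j_s(p,q)^2}{r(p,q)}=j_s(p,q)+\frac{j_p(q,s)\,j_q(p,s)}{r(p,q)}=r(p,s)-\frac{j_p(q,s)^2}{r(p,q)}.$$
   Context: A metrized graph $\Gamma$ is a finite connected graph (multiple edges and self-loops allowed) in which each edge is identified with a closed line segment of positive length. $\Gamma$ is regarded as a resistive electric circuit in which each edge is a resistor whose resistance equals its length. $r(x,y)$ is the effective resistance between $x$ and $y$; $j_z(x,y)$ is the voltage at $x$ when a unit current enters at $y$ and exits at $z$, with reference voltage $0$ at $z$. $\Gamma_{pq}$ is the metrized graph obtained from $\Gamma$ by identifying $p$ and $q$, and $r_{\Gamma_{pq}}$ is its resistance function. *)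

theory Defs
  imports Complex_Main
begin

text \<open>A metrized graph is given by a model: a finite vertex set V, a finite edge set E,
  each edge e having endpoints ends e (self-loops and multiple edges allowed) and a
  positive length len e, the underlying graph being connected.  Points of the metrized
  graph under consideration are taken as vertices of the model (any point can be made
  a vertex by subdividing an edge, which does not change the resistance network).\<close>

definition adj :: "'e set \<Rightarrow> ('e \<Rightarrow> 'v \<times> 'v) \<Rightarrow> ('v \<times> 'v) set" where
  "adj E ends = {ends e | e. e \<in> E} \<union> {prod.swap (ends e) | e. e \<in> E}"

definition metrized_graph ::
  "'v set \<Rightarrow> 'e set \<Rightarrow> ('e \<Rightarrow> 'v \<times> 'v) \<Rightarrow> ('e \<Rightarrow> real) \<Rightarrow> bool" where
  "metrized_graph V E ends len \<longleftrightarrow>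
     finite V \<and> finite E \<and> V \<noteq> {} \<and>
     (\<forall>e\<in>E. fst (ends e) \<in> V \<and> snd (ends e) \<in> V \<and> len e > 0) \<and>
     (\<forall>a\<in>V. \<forall>b\<in>V. (a, b) \<in> (adj E ends)\<^sup>*)"

text \<open>Kirchhoff: net current flowing out of vertex x into the network, for potential f
  (each edge is a resistor of resistance len e).\<close>
definition lap :: "'e set \<Rightarrow> ('e \<Rightarrow> 'v \<times> 'v) \<Rightarrow> ('e \<Rightarrow> real) \<Rightarrow> ('v \<Rightarrow> real) \<Rightarrow> 'v \<Rightarrow> real" where
  "lap E ends len f x =
     (\<Sum>e\<in>E. (if fst (ends e) = x then (f x - f (snd (ends e))) / len e else 0)
            + (if snd (ends e) = x then (f x - f (fst (ends e))) / len e else 0))"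

text \<open>j_z(x,y): voltage at x when unit current enters at y and exits at z, with
  voltage 0 at z.\<close>
definition jfun ::
  "'v set \<Rightarrow> 'e set \<Rightarrow> ('e \<Rightarrow> 'v \<times> 'v) \<Rightarrow> ('e \<Rightarrow> real) \<Rightarrow> 'v \<Rightarrow> 'v \<Rightarrow> 'v \<Rightarrow> real" where
  "jfun V E ends len z x y =
     (THE f. (\<forall>w. w \<notin> V \<longrightarrow> f w = 0) \<and> f z = 0 \<and>
        (\<forall>w\<in>V. lap E ends len f w = (if w = y then 1 else 0) - (if w = z then 1 else 0))) x"

definition resist ::
  "'v set \<Rightarrow> 'e set \<Rightarrow> ('e \<Rightarrow> 'v \<times> 'v) \<Rightarrow> ('e \<Rightarrow> real) \<Rightarrow> 'v \<Rightarrow> 'v \<Rightarrow> real" where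
  "resist V E ends len x y = jfun V E ends len y x x"

definition ident :: "'v \<Rightarrow> 'v \<Rightarrow> 'v \<Rightarrow> 'v" where
  "ident p q v = (if v = q then p else v)"

definition ident_ends :: "'v \<Rightarrow> 'v \<Rightarrow> ('e \<Rightarrow> 'v \<times> 'v) \<Rightarrow> 'e \<Rightarrow> 'v \<times> 'v" where
  "ident_ends p q ends e = map_prod (ident p q) (ident p q) (ends e)"

end

theory Submission
  imports Defs "HOL-Library.Function_Algebras"
begin
lemma sum_fun_apply: "(sum g A) x = (\<Sum>a\<in>A. g a x)" for g :: "'a \<Rightarrow> 'b \<Rightarrow> 'c::comm_monoid_add"
  by (induction A rule: infinite_finite_induct) auto

lemma fin_lin_surj:
  fixes T :: "('v \<Rightarrow> real) \<Rightarrow> 'v \<Rightarrow> real" and V :: "'v set" and c :: "'v \<Rightarrow> real"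
  assumes fin: "finite V"
   and add: "\<And>f g. T (f + g) = T f + T g"
   and scl: "\<And>r f. T (\<lambda>x. r * f x) = (\<lambda>x. r * T f x)"
   and maps: "\<And>f. \<forall>w. w \<notin> V \<longrightarrow> f w = 0 \<Longrightarrow> \<forall>w. w \<notin> V \<longrightarrow> T f w = 0"
   and inj: "\<And>f. \<forall>w. w \<notin> V \<longrightarrow> f w = 0 \<Longrightarrow> T f = 0 \<Longrightarrow> f = 0"
   and c: "\<forall>w. w \<notin> V \<longrightarrow> c w = 0"
  shows "\<exists>f. (\<forall>w. w \<notin> V \<longrightarrow> f w = 0) \<and> T f = c"
proof -
  define sc :: "real \<Rightarrow> ('v\<Rightarrow>real) \<Rightarrow> ('v\<Rightarrow>real)" where "sc r f = (\<lambda>x. r * f x)" for r f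
  interpret vs: vector_space sc by unfold_locales (auto simp: sc_def fun_eq_iff algebra_simps)
  have lin: "Vector_Spaces.linear sc sc T"
    unfolding Vector_Spaces.linear_iff using add scl by (auto simp: sc_def vs.vector_space_axioms)
  interpret lt: Vector_Spaces.linear sc sc T by (rule lin)
  define S where "S = {f::'v\<Rightarrow>real. \<forall>w. w \<notin> V \<longrightarrow> f w = 0}"
  define \<delta> where "\<delta> v = (\<lambda>x::'v. if x = v then (1::real) else 0)" for v
  define B where "B = \<delta> ` V"
  have subS: "vs.subspace S" unfolding vs.subspace_def S_def sc_def by auto
  have "vs.span B \<subseteq> S"
    by (rule vs.span_minimal[OF _ subS]) (auto simp: B_def S_def \<delta>_def)
  moreover have "S \<subseteq> vs.span B"
  proof
    fix f assume f: "f \<in> S"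
    have "f = (\<Sum>v\<in>V. sc (f v) (\<delta> v))"
    proof
      fix x
      have "(\<Sum>v\<in>V. sc (f v) (\<delta> v)) x = (\<Sum>v\<in>V. (if x = v then f v else 0))"
        unfolding sum_fun_apply by (auto simp: sc_def \<delta>_def intro!: sum.cong)
      also have "\<dots> = f x" using f fin by (auto simp: S_def sum.delta)
      finally show "f x = (\<Sum>v\<in>V. sc (f v) (\<delta> v)) x" by simp
    qed
    also have "\<dots> \<in> vs.span B"
      by (intro vs.span_sum vs.span_scale vs.span_base) (auto simp: B_def)
    finally show "f \<in> vs.span B" .
  qed
  ultimately have spanB: "vs.span B = S" by blast
  have indB: "vs.independent B"
    unfolding vs.dependent_def
  proof
    assume "\<exists>a\<in>B. a \<in> vs.span (B - {a})"
    then obtain v where v: "v \<in> V" "\<delta> v \<in> vs.span (B - {\<delta> v})" by (auto simp: B_def)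
    have "vs.span (B - {\<delta> v}) \<subseteq> {f. f v = 0}"
    proof (rule vs.span_minimal)
      show "B - {\<delta> v} \<subseteq> {f. f v = 0}"
        by (auto simp: B_def \<delta>_def fun_eq_iff)
      show "vs.subspace {f. f v = 0}" unfolding vs.subspace_def sc_def by auto
    qed
    with v show False by (auto simp: \<delta>_def)
  qed
  have injS: "inj_on T S"
    using lt.inj_on_iff_eq_0[OF subS] inj by (auto simp: S_def)
  have BS: "B \<subseteq> S" using spanB vs.span_superset by blast
  have indC: "vs.independent (T ` B)"
    by (rule lt.independent_injective_image[OF indB]) (simp add: spanB injS)
  have finB: "finite B" using fin by (simp add: B_def)
  have cardC: "card (T ` B) = card B"
    using inj_on_subset[OF injS BS] by (rule card_image)
  have cS: "c \<in> S" using c by (simp add: S_def)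
  have "c \<in> vs.span (T ` B)"
  proof (rule ccontr)
    assume nc: "c \<notin> vs.span (T ` B)"
    have ind2: "vs.independent (insert c (T ` B))" by (rule vs.independent_insertI[OF nc indC])
    have TBS: "T ` B \<subseteq> S"
      using BS maps by (auto simp: S_def)
    have "insert c (T ` B) \<subseteq> vs.span B" using TBS cS spanB by auto
    from vs.independent_span_bound[OF finB ind2 this]
    have "card (insert c (T ` B)) \<le> card B" by simp
    moreover have "c \<notin> T ` B" using nc vs.span_base by blast
    ultimately show False using cardC finB by simp
  qed
  then obtain f where "f \<in> vs.span B" "T f = c" using lt.span_image by auto
  then show ?thesis using spanB by (auto simp: S_def)
qed

lemma mgD:
  assumes "metrized_graph V E ends len"
  shows "finite V" "finite E" "V \<noteq> {}" "\<And>e. e \<in> E \<Longrightarrow> fst (ends e) \<in> V"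
    "\<And>e. e \<in> E \<Longrightarrow> snd (ends e) \<in> V" "\<And>e. e \<in> E \<Longrightarrow> len e > 0"
    "\<And>a b. a \<in> V \<Longrightarrow> b \<in> V \<Longrightarrow> (a, b) \<in> (adj E ends)\<^sup>*"
  using assms unfolding metrized_graph_def by auto

lemma lap_lin:
  "lap E ends len (\<lambda>w. a * f w + b * g w) x = a * lap E ends len f x + b * lap E ends len g x"
  unfolding lap_def sum_distrib_left sum.distrib[symmetric]
  by (rule sum.cong) (auto simp: diff_divide_distrib add_divide_distrib algebra_simps)

lemma lap_cong:
  assumes "metrized_graph V E ends len" "\<forall>w\<in>V. f w = g w"
  shows "lap E ends len f x = lap E ends len g x"
  unfolding lap_def using mgD[OF assms(1)] assms(2)
  by (intro sum.cong) auto

lemma lap_shift: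
  "lap E ends len (\<lambda>w. f w + k) x = lap E ends len f x"
  unfolding lap_def by (rule sum.cong) auto

lemma green:
  assumes "metrized_graph V E ends len"
  shows "(\<Sum>w\<in>V. g w * lap E ends len f w)
     = (\<Sum>e\<in>E. (f (fst (ends e)) - f (snd (ends e))) * (g (fst (ends e)) - g (snd (ends e))) / len e)"
proof -
  note m = mgD[OF assms]
  have "(\<Sum>w\<in>V. g w * lap E ends len f w)
     = (\<Sum>e\<in>E. \<Sum>w\<in>V. g w * ((if fst (ends e) = w then (f w - f (snd (ends e))) / len e else 0)
            + (if snd (ends e) = w then (f w - f (fst (ends e))) / len e else 0)))"
    unfolding lap_def sum_distrib_left by (rule sum.swap)
  also have "\<dots> = (\<Sum>e\<in>E. (f (fst (ends e)) - f (snd (ends e))) * (g (fst (ends e)) - g (snd (ends e))) / len e)"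
  proof (rule sum.cong[OF refl])
    fix e assume e: "e \<in> E"
    have "(\<Sum>w\<in>V. g w * ((if fst (ends e) = w then (f w - f (snd (ends e))) / len e else 0)
            + (if snd (ends e) = w then (f w - f (fst (ends e))) / len e else 0)))
       = (\<Sum>w\<in>V. (if fst (ends e) = w then g w * (f w - f (snd (ends e))) / len e else 0))
         + (\<Sum>w\<in>V. (if snd (ends e) = w then g w * (f w - f (fst (ends e))) / len e else 0))"
      unfolding sum.distrib[symmetric] by (rule sum.cong) (auto simp: algebra_simps)
    also have "\<dots> = g (fst (ends e)) * (f (fst (ends e)) - f (snd (ends e))) / len e
         + g (snd (ends e)) * (f (snd (ends e)) - f (fst (ends e))) / len e"
      using m(1) m(4)[OF e] m(5)[OF e] by (simp add: sum.delta)
    also have "\<dots> = (f (fst (ends e)) - f (snd (ends e))) * (g (fst (ends e)) - g (snd (ends e))) / len e"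
      by (simp add: diff_divide_distrib add_divide_distrib algebra_simps)
    finally show "(\<Sum>w\<in>V. g w * ((if fst (ends e) = w then (f w - f (snd (ends e))) / len e else 0)
            + (if snd (ends e) = w then (f w - f (fst (ends e))) / len e else 0))) = \<dots>" .
  qed
  finally show ?thesis .
qed

lemma green_sym:
  assumes "metrized_graph V E ends len"
  shows "(\<Sum>w\<in>V. g w * lap E ends len f w) = (\<Sum>w\<in>V. f w * lap E ends len g w)"
  unfolding green[OF assms] by (rule sum.cong) (auto simp: algebra_simps)

lemma lap_sum0:
  assumes "metrized_graph V E ends len"
  shows "(\<Sum>w\<in>V. lap E ends len f w) = 0"
  using green[OF assms, of "\<lambda>_. 1" f] by simp

lemma energy_zero:
  assumes "metrized_graph V E ends len"
    and "(\<Sum>w\<in>V. f w * lap E ends len f w) = 0" and "e \<in> E"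
  shows "f (fst (ends e)) = f (snd (ends e))"
proof -
  note m = mgD[OF assms(1)]
  define t where "t e = (f (fst (ends e)) - f (snd (ends e))) * (f (fst (ends e)) - f (snd (ends e))) / len e" for e
  have nn: "\<forall>e\<in>E. 0 \<le> t e"
  proof
    fix e assume "e \<in> E"
    then have "len e > 0" by (rule m(6))
    then show "0 \<le> t e" unfolding t_def by (intro divide_nonneg_pos) simp_all
  qed
  have "sum t E = 0"
    using assms(2) green[OF assms(1), of f f] by (simp add: t_def)
  then have "t e = 0"
    using sum_nonneg_eq_0_iff[OF m(2)] nn assms(3) by blast
  then show ?thesis using m(6)[OF assms(3)] by (simp add: t_def)
qed

lemma harmonic_const:
  assumes "metrized_graph V E ends len" "\<forall>w\<in>V. lap E ends len f w = 0"
    and "a \<in> V" "b \<in> V"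
  shows "f a = f b"
proof -
  note m = mgD[OF assms(1)]
  have en: "(\<Sum>w\<in>V. f w * lap E ends len f w) = 0" using assms(2) by simp
  have "(a, b) \<in> (adj E ends)\<^sup>*" using m(7) assms(3,4) by blast
  then show ?thesis
  proof (induction rule: rtrancl_induct)
    case base then show ?case by simp
  next
    case (step y z)
    from step.hyps(2) obtain e where "e \<in> E" "(y, z) = ends e \<or> (y, z) = prod.swap (ends e)"
      unfolding adj_def by blast
    moreover have "f (fst (ends e)) = f (snd (ends e))"
      using energy_zero[OF assms(1) en \<open>e \<in> E\<close>] .
    ultimately show ?case using step.IH
      by (cases "ends e") auto
  qed
qed

definition sol where
  "sol V E ends len z c f \<longleftrightarrow> (\<forall>w. w \<notin> V \<longrightarrow> f w = 0) \<and> f z = 0 \<and>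
        (\<forall>w\<in>V. lap E ends len f w = c w)"

lemma sol_unique:
  assumes "metrized_graph V E ends len" "z \<in> V" "sol V E ends len z c f" "sol V E ends len z c g"
  shows "f = g"
proof -
  have h: "\<forall>w\<in>V. lap E ends len (\<lambda>w. 1 * f w + (-1) * g w) w = 0"
    using assms(3,4) unfolding sol_def lap_lin by simp
  have "\<forall>a\<in>V. f a - g a = f z - g z"
    using harmonic_const[OF assms(1) h _ assms(2)] by simp
  then show ?thesis using assms(3,4) unfolding sol_def by (auto simp: fun_eq_iff)
qed

lemma sol_exists:
  assumes "metrized_graph V E ends len" "z \<in> V" "(\<Sum>w\<in>V. c w) = 0"
  shows "\<exists>f. sol V E ends len z c f"
proof -
  note m = mgD[OF assms(1)]
  define T where "T f = (\<lambda>w. if w \<in> V then (if w = z then f z else lap E ends len f w) else 0)"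
    for f :: "'a \<Rightarrow> real"
  define c' where "c' = (\<lambda>w. if w \<in> V \<and> w \<noteq> z then c w else 0)"
  have "\<exists>f. (\<forall>w. w \<notin> V \<longrightarrow> f w = 0) \<and> T f = c'"
  proof (rule fin_lin_surj[OF m(1)])
    show "T (f + g) = T f + T g" for f g
      using lap_lin[of E ends len 1 f 1 g] by (auto simp: T_def fun_eq_iff plus_fun_def)
    show "T (\<lambda>x. r * f x) = (\<lambda>x. r * T f x)" for r f
      using lap_lin[of E ends len r f 0 f] by (auto simp: T_def fun_eq_iff)
    show "\<forall>w. w \<notin> V \<longrightarrow> T f w = 0" for f by (simp add: T_def)
    show "\<forall>w. w \<notin> V \<longrightarrow> c' w = 0" by (simp add: c'_def)
    show "f = 0" if f0: "\<forall>w. w \<notin> V \<longrightarrow> f w = 0" and Tf: "T f = 0" for f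
    proof -
      have fz: "f z = 0" using Tf assms(2) by (auto simp: T_def fun_eq_iff dest: spec[of _ z])
      have l: "\<forall>w\<in>V - {z}. lap E ends len f w = 0"
      proof
        fix w assume w: "w \<in> V - {z}"
        have "T f w = 0" using Tf by simp
        then show "lap E ends len f w = 0" using w by (simp add: T_def)
      qed
      have "lap E ends len f z = 0"
        using lap_sum0[OF assms(1), of f] l m(1) assms(2)
        by (simp add: sum.remove[of V z])
      then have "\<forall>w\<in>V. lap E ends len f w = 0" using l by blast
      then have "\<forall>a\<in>V. f a = f z" using harmonic_const[OF assms(1)] assms(2) by blast
      then show ?thesis using f0 fz by (auto simp: fun_eq_iff)
    qed
  qed
  then obtain f where f0: "\<forall>w. w \<notin> V \<longrightarrow> f w = 0" and Tf: "T f = c'" by blast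
  have fz: "f z = 0" using Tf assms(2) by (auto simp: T_def c'_def fun_eq_iff dest: spec[of _ z])
  have l: "\<forall>w\<in>V - {z}. lap E ends len f w = c w"
  proof
    fix w assume w: "w \<in> V - {z}"
    have "T f w = c' w" using Tf by simp
    then show "lap E ends len f w = c w" using w by (simp add: T_def c'_def)
  qed
  have "(\<Sum>w\<in>V - {z}. lap E ends len f w) = (\<Sum>w\<in>V - {z}. c w)"
    using l by simp
  then have "lap E ends len f z = c z"
    using lap_sum0[OF assms(1), of f] assms(3) m(1) assms(2)
    by (simp add: sum.remove[of V z])
  then show ?thesis using f0 fz l unfolding sol_def by blast
qed

lemma jfun_char:
  assumes mg: "metrized_graph V E ends len" and "y \<in> V" "z \<in> V" "x \<in> V"
    and l: "\<forall>w\<in>V. lap E ends len f w = (if w = y then 1 else 0) - (if w = z then 1 else 0)"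
  shows "jfun V E ends len z x y = f x - f z"
proof -
  define g where "g = (\<lambda>w. if w \<in> V then f w - f z else 0)"
  have sg: "sol V E ends len z (\<lambda>w. (if w = y then 1 else 0) - (if w = z then 1 else 0)) g"
    unfolding sol_def
  proof (intro conjI ballI allI impI)
    fix w assume "w \<in> V"
    have "lap E ends len g w = lap E ends len (\<lambda>w. f w + (- f z)) w"
      by (rule lap_cong[OF mg]) (simp add: g_def)
    also have "\<dots> = lap E ends len f w" by (rule lap_shift)
    finally show "lap E ends len g w = (if w = y then 1 else 0) - (if w = z then 1 else 0)"
      using l \<open>w \<in> V\<close> by simp
  qed (auto simp: g_def assms(3))
  have "jfun V E ends len z x y = g x"
    unfolding jfun_def
    by (rule fun_cong[of _ g], rule the_equality)
       (use sg in \<open>simp add: sol_def\<close>, use sol_unique[OF mg assms(3) _ sg] in \<open>simp add: sol_def\<close>)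
  then show ?thesis using assms(4) by (simp add: g_def)
qed


lemma lap_ident:
  assumes "\<phi> q = \<phi> p" "w \<noteq> q" "p \<noteq> q"
  shows "lap E (ident_ends p q ends) len \<phi> w
       = lap E ends len \<phi> w + (if w = p then lap E ends len \<phi> q else 0)"
proof (cases "w = p")
  case True
  have "lap E (ident_ends p q ends) len \<phi> p = lap E ends len \<phi> p + lap E ends len \<phi> q"
    unfolding lap_def sum.distrib[symmetric] using assms
    by (intro sum.cong) (auto simp: ident_ends_def ident_def split: prod.splits)
  then show ?thesis using True by simp
next
  case False
  have "lap E (ident_ends p q ends) len \<phi> w = lap E ends len \<phi> w"
    unfolding lap_def using assms False
    by (intro sum.cong) (auto simp: ident_ends_def ident_def split: prod.splits)
  then show ?thesis using False by simp
qed

lemma mg_ident: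
  assumes mg: "metrized_graph V E ends len" and "p \<in> V" "q \<in> V" "p \<noteq> q"
  shows "metrized_graph (V - {q}) E (ident_ends p q ends) len"
proof -
  note m = mgD[OF mg]
  have step: "(ident p q x, ident p q y) \<in> (adj E (ident_ends p q ends))\<^sup>*" if "(x, y) \<in> (adj E ends)\<^sup>*" for x y
    using that
  proof (induction rule: rtrancl_induct)
    case base then show ?case by simp
  next
    case (step y z)
    from step.hyps(2) obtain e where e: "e \<in> E" "(y, z) = ends e \<or> (y, z) = prod.swap (ends e)"
      unfolding adj_def by blast
    have "(ident p q y, ident p q z) \<in> adj E (ident_ends p q ends)"
      using e(2)
    proof
      assume "(y, z) = ends e"
      then have "(ident p q y, ident p q z) = ident_ends p q ends e"
        by (cases "ends e") (simp add: ident_ends_def)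
      then show ?thesis using e(1) unfolding adj_def by blast
    next
      assume "(y, z) = prod.swap (ends e)"
      then have "(ident p q y, ident p q z) = prod.swap (ident_ends p q ends e)"
        by (cases "ends e") (simp add: ident_ends_def)
      then show ?thesis using e(1) unfolding adj_def by blast
    qed
    then show ?case using step.IH by (rule rtrancl_into_rtrancl[rotated])
  qed
  show ?thesis unfolding metrized_graph_def
  proof (intro conjI ballI)
    fix a b assume "a \<in> V - {q}" "b \<in> V - {q}"
    then show "(a, b) \<in> (adj E (ident_ends p q ends))\<^sup>*"
      using step[OF m(7)[of a b]] by (simp add: ident_def)
  qed (use m assms in \<open>auto simp: ident_ends_def ident_def\<close>)
qed


lemma sum_delta2:
  assumes "finite V" "y \<in> V" "z \<in> V"
  shows "(\<Sum>w\<in>V. g w * ((if w = y then 1 else 0) - (if w = z then 1 else 0))) = g y - (g z :: real)"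
proof -
  have "(\<Sum>w\<in>V. g w * ((if w = y then 1 else 0) - (if w = z then 1 else 0)))
     = (\<Sum>w\<in>V. (if w = y then g y else 0) - (if w = z then g z else 0))"
    by (rule sum.cong) auto
  also have "\<dots> = g y - g z" using assms by (simp add: sum_subtractf sum.delta)
  finally show ?thesis .
qed

lemma sum_delta0:
  assumes "finite V" "y \<in> V" "z \<in> V"
  shows "(\<Sum>w\<in>V. ((if w = y then 1 else 0) - (if w = z then 1 else 0))) = (0::real)"
  using assms by (simp add: sum_subtractf sum.delta)

lemma lap_flat:
  assumes "\<forall>e\<in>E. f (fst (ends e)) = f (snd (ends e))"
  shows "lap E ends len f w = 0"
  unfolding lap_def using assms by (intro sum.neutral) auto

lemma lap_zero: "lap E ends len (\<lambda>_. 0) w = 0"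
  by (rule lap_flat) simp

theorem theorem2p4:
  fixes V :: "'v set" and E :: "'e set" and ends :: "'e \<Rightarrow> 'v \<times> 'v"
    and len :: "'e \<Rightarrow> real" and p q s :: 'v
  assumes "metrized_graph V E ends len"
    and "p \<in> V" and "q \<in> V" and "s \<in> V" and "p \<noteq> q"
  shows "resist (V - {q}) E (ident_ends p q ends) len p (ident p q s)
           = (resist V E ends len p s * resist V E ends len q s - (jfun V E ends len s p q)\<^sup>2)
               / resist V E ends len p q
       \<and> resist (V - {q}) E (ident_ends p q ends) len p (ident p q s)
           = jfun V E ends len s p q
             + jfun V E ends len p q s * jfun V E ends len q p s / resist V E ends len p q
       \<and> resist (V - {q}) E (ident_ends p q ends) len p (ident p q s)
           = resist V E ends len p s - (jfun V E ends len p q s)\<^sup>2 / resist V E ends len p q"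
proof -
  note mg = assms(1)
  note m = mgD[OF mg]
  note pV = assms(2) and qV = assms(3) and sV = assms(4) and pq = assms(5)
  have mg': "metrized_graph (V - {q}) E (ident_ends p q ends) len"
    by (rule mg_ident[OF mg pV qV pq])
  define d where "d y z w = (if w = y then 1 else 0) - (if w = z then (1::real) else 0)" for y z w :: 'v
  obtain up where up: "sol V E ends len s (d p s) up"
    using sol_exists[OF mg sV] sum_delta0[OF m(1) pV sV] unfolding d_def by blast
  obtain uq where uq: "sol V E ends len s (d q s) uq"
    using sol_exists[OF mg sV] sum_delta0[OF m(1) qV sV] unfolding d_def by blast
  have Lp: "\<forall>w\<in>V. lap E ends len up w = d p s w" and ups: "up s = 0"
    using up unfolding sol_def by auto
  have Lq: "\<forall>w\<in>V. lap E ends len uq w = d q s w" and uqs: "uq s = 0"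
    using uq unfolding sol_def by auto
  define X where "X = up p"
  define Y where "Y = uq q"
  define J where "J = uq p"
  have symm: "up q = J"
  proof -
    have "(\<Sum>w\<in>V. uq w * lap E ends len up w) = (\<Sum>w\<in>V. up w * lap E ends len uq w)"
      by (rule green_sym[OF mg])
    also have "(\<Sum>w\<in>V. uq w * lap E ends len up w) = (\<Sum>w\<in>V. uq w * d p s w)"
      using Lp by simp
    also have "\<dots> = uq p - uq s" unfolding d_def by (rule sum_delta2[OF m(1) pV sV])
    also have "(\<Sum>w\<in>V. up w * lap E ends len uq w) = (\<Sum>w\<in>V. up w * d q s w)"
      using Lq by simp
    also have "\<dots> = up q - up s" unfolding d_def by (rule sum_delta2[OF m(1) qV sV])
    finally show ?thesis using ups uqs by (simp add: J_def)
  qed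
  have rps: "resist V E ends len p s = X"
    unfolding resist_def using jfun_char[OF mg pV sV pV, of up] Lp ups by (simp add: d_def X_def)
  have rqs: "resist V E ends len q s = Y"
    unfolding resist_def using jfun_char[OF mg qV sV qV, of uq] Lq uqs by (simp add: d_def Y_def)
  have jspq: "jfun V E ends len s p q = J"
    using jfun_char[OF mg qV sV pV, of uq] Lq uqs by (simp add: d_def J_def)
  define R where "R = X + Y - 2 * J"
  define g where "g w = 1 * up w + (-1) * uq w" for w
  have Lg: "\<forall>w\<in>V. lap E ends len g w = d p q w"
    unfolding g_def lap_lin using Lp Lq by (auto simp: d_def)
  have rpq: "resist V E ends len p q = R"
    unfolding resist_def using jfun_char[OF mg pV qV pV, of g] Lg
    by (simp add: d_def g_def R_def X_def Y_def J_def symm)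
  have L1: "\<forall>w\<in>V. lap E ends len (\<lambda>w. (-1) * up w + 0 * uq w) w
      = (if w = s then 1 else 0) - (if w = p then 1 else 0)"
  proof
    fix w assume w: "w \<in> V"
    have "lap E ends len (\<lambda>w. (-1) * up w + 0 * uq w) w = (-1) * lap E ends len up w + 0 * lap E ends len uq w"
      by (rule lap_lin)
    then show "lap E ends len (\<lambda>w. (-1) * up w + 0 * uq w) w = (if w = s then 1 else 0) - (if w = p then 1 else 0)"
      using Lp w by (simp add: d_def)
  qed
  have jpqs: "jfun V E ends len p q s = X - J"
    using jfun_char[OF mg sV pV qV L1] by (simp add: X_def symm)
  have L2: "\<forall>w\<in>V. lap E ends len (\<lambda>w. 0 * up w + (-1) * uq w) w
      = (if w = s then 1 else 0) - (if w = q then 1 else 0)"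
  proof
    fix w assume w: "w \<in> V"
    have "lap E ends len (\<lambda>w. 0 * up w + (-1) * uq w) w = 0 * lap E ends len up w + (-1) * lap E ends len uq w"
      by (rule lap_lin)
    then show "lap E ends len (\<lambda>w. 0 * up w + (-1) * uq w) w = (if w = s then 1 else 0) - (if w = q then 1 else 0)"
      using Lq w by (simp add: d_def)
  qed
  have jqps: "jfun V E ends len q p s = Y - J"
    using jfun_char[OF mg sV qV pV L2] by (simp add: Y_def J_def)
  have R0: "R \<noteq> 0"
  proof
    assume R: "R = 0"
    have "(\<Sum>w\<in>V. g w * lap E ends len g w) = (\<Sum>w\<in>V. g w * d p q w)" using Lg by simp
    also have "\<dots> = g p - g q" unfolding d_def by (rule sum_delta2[OF m(1) pV qV])
    also have "\<dots> = R" by (simp add: g_def R_def X_def Y_def J_def symm)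
    finally have "(\<Sum>w\<in>V. g w * lap E ends len g w) = 0" using R by simp
    then have "\<forall>e\<in>E. g (fst (ends e)) = g (snd (ends e))"
      using energy_zero[OF mg] by blast
    then have "lap E ends len g p = 0" by (rule lap_flat)
    moreover have "lap E ends len g p = 1" using Lg pV pq by (simp add: d_def)
    ultimately show False by simp
  qed
  show ?thesis
  proof (cases "s = p \<or> s = q")
    case True
    have id: "ident p q s = p" using True by (auto simp: ident_def)
    have pV': "p \<in> V - {q}" using pV pq by simp
    have "resist (V - {q}) E (ident_ends p q ends) len p p = 0"
      unfolding resist_def using jfun_char[OF mg' pV' pV' pV', of "\<lambda>_. 0"]
      by (simp add: lap_zero)
    moreover have J0: "J = 0" using True ups uqs symm by (auto simp: J_def)
    moreover have "s = p \<Longrightarrow> X = 0" using ups by (simp add: X_def)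
    moreover have "s = q \<Longrightarrow> Y = 0" using uqs by (simp add: Y_def)
    ultimately show ?thesis using True id rps rqs jspq rpq jpqs jqps R0
      by (auto simp: power2_eq_square R_def)
  next
    case False
    then have sp: "s \<noteq> p" and sq: "s \<noteq> q" by auto
    have id: "ident p q s = s" using sq by (simp add: ident_def)
    define a where "a = (Y - J) / R"
    define \<phi> where "\<phi> w = a * up w + (1 - a) * uq w" for w
    have aR: "a * R = Y - J" using R0 by (simp add: a_def)
    have phq: "\<phi> q = \<phi> p"
    proof -
      have "\<phi> q - \<phi> p = (Y - J) - a * R"
        by (simp add: \<phi>_def symm X_def Y_def J_def R_def algebra_simps)
      then show ?thesis using aR by simp
    qed
    have pV': "p \<in> V - {q}" and sV': "s \<in> V - {q}" using pV pq sV sq by auto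
    have L': "\<forall>w\<in>V - {q}. lap E (ident_ends p q ends) len \<phi> w = d p s w"
    proof
      fix w assume w: "w \<in> V - {q}"
      have "lap E (ident_ends p q ends) len \<phi> w
          = lap E ends len \<phi> w + (if w = p then lap E ends len \<phi> q else 0)"
        using w by (intro lap_ident[OF phq _ pq]) auto
      also have "\<dots> = (a * d p s w + (1 - a) * d q s w)
             + (if w = p then a * d p s q + (1 - a) * d q s q else 0)"
        using w Lp Lq qV unfolding \<phi>_def lap_lin by auto
      also have "\<dots> = d p s w" using sp sq pq w by (auto simp: d_def algebra_simps)
      finally show "lap E (ident_ends p q ends) len \<phi> w = d p s w" .
    qed
    have "resist (V - {q}) E (ident_ends p q ends) len p s = \<phi> p - \<phi> s"
      unfolding resist_def using jfun_char[OF mg' pV' sV' pV', of \<phi>] L' by (simp add: d_def)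
    also have "\<dots> = a * X + (1 - a) * J" using ups uqs by (simp add: \<phi>_def X_def J_def)
    finally have val: "resist (V - {q}) E (ident_ends p q ends) len p (ident p q s) = a * X + (1 - a) * J"
      using id by simp
    have e2: "a * X + (1 - a) * J = J + (X - J) * (Y - J) / R"
    proof -
      have "a * X + (1 - a) * J = J + a * (X - J)" by (simp add: algebra_simps)
      also have "a * (X - J) = (X - J) * (Y - J) / R" by (simp add: a_def)
      finally show ?thesis .
    qed
    have e1a: "J * R + (X - J) * (Y - J) = X * Y - J^2"
      by (simp add: R_def power2_eq_square algebra_simps)
    have e1b: "J + (X - J) * (Y - J) / R = (J * R + (X - J) * (Y - J)) / R"
      using R0 by (simp add: field_simps)
    have e1: "a * X + (1 - a) * J = (X * Y - J^2) / R"
      using e2 e1a e1b by simp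
    have e3a: "X * R - (X - J)^2 = X * Y - J^2"
      by (simp add: R_def power2_eq_square algebra_simps)
    have e3b: "X - (X - J)^2 / R = (X * R - (X - J)^2) / R"
      using R0 by (simp add: field_simps)
    have e3: "a * X + (1 - a) * J = X - (X - J)^2 / R"
      using e1 e3a e3b by simp
    show ?thesis unfolding val rps rqs jspq rpq jpqs jqps using e1 e2 e3 by simp
  qed
qed

end
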